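(* Let $\sigma$ be any of the softmax, softmax-1 or Bayes-softmax activations. Then for all $m\in\mathbb R^{H\times F}$, $b\in\mathbb R^H$, $v\in\mathbb R$, the gradient of the reparameterized loss with respect to $r$ vanishes at $r=0$: $\nabla_r\tilde{\mathcal E}_\sigma(m,0,b,v)=0$.
   Context: Fix integers $L,H,F\ge1$ and a distribution $P_\theta$ on $\mathbb R^F$. For $m\in\mathbb R^{H\times F}$, $r\in\mathbb R^{H\times H}$ symmetric, $b\in\mathbb R^H$, $v\in\mathbb R$: $\tilde{\mathcal E}_\sigma(m,r,b,v)=\mathbb E\big[\sum_{\ell=1}^L(\delta_{\ell,\epsilon}-\frac1H\sum_{h=1}^H\sigma(\chi,b,v;h)_\ell)^2\big]$, $\chi_{h\ell}=\sum_fm_{hf}\chi^*_{f\ell}+\sum_{h'}r_{hh'}\xi_{h'\ell}$, with $\epsilon\sim\mathrm{Unif}(\{1,\dots,L\})$, $\theta\sim P_\theta$, and conditionally independent $\chi^*_{:\ell}\sim\mathcal N(\delta_{\ell,\epsilon}\theta,I_F)$, $\xi_{:\ell}\sim\mathcal N(0,I_H)$. Activations: softmax $\sigma(\chi,b,v;h)_\ell=e^{\chi_{h\ell}}/\sum_{\ell'}e^{\chi_{h\ell'}}$; softmax-1 $v e^{\chi_{h\ell}}/(e^{b_h}+\sum_{\ell'}e^{\chi_{h\ell'}})$; Bayes-softmax $e^{\chi_{h\ell}+b_h}/(\frac1H\sum_{h'}\sum_{\ell'}e^{\chi_{h'\ell'}+b_{h'}})$. *)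

theory Defs
  imports "HOL-Analysis.Analysis" "HOL-Probability.Probability"
begin

text \<open>Index types: 'l = positions {1..L}, 'h = heads {1..H}, 'f = features {1..F}.
  All are finite (hence nonempty, so L,H,F >= 1).\<close>

type_synonym ('l,'h) activation = "real^'l^'h \<Rightarrow> real^'h \<Rightarrow> real \<Rightarrow> 'h \<Rightarrow> 'l \<Rightarrow> real"

definition softmax :: "('l::finite,'h::finite) activation" where
  "softmax chi b v h l = exp (chi$h$l) / (\<Sum>l'\<in>UNIV. exp (chi$h$l'))"

definition softmax1 :: "('l::finite,'h::finite) activation" where
  "softmax1 chi b v h l = v * exp (chi$h$l) / (exp (b$h) + (\<Sum>l'\<in>UNIV. exp (chi$h$l')))"

definition bayes_softmax :: "('l::finite,'h::finite) activation" where
  "bayes_softmax chi b v h l = exp (chi$h$l + b$h) /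
     ((1 / real CARD('h)) * (\<Sum>h'\<in>UNIV. \<Sum>l'\<in>UNIV. exp (chi$h'$l' + b$h')))"

definition scores :: "real^'f^'h \<Rightarrow> real^'h^'h \<Rightarrow> real^'l^'f \<Rightarrow> real^'l^'h \<Rightarrow> real^'l^'h" where
  "scores m r cs xi = (\<chi> h l. (\<Sum>f\<in>UNIV. m$h$f * cs$f$l) + (\<Sum>h'\<in>UNIV. r$h$h' * xi$h'$l))"

definition sample_loss ::
  "('l::finite,'h::finite) activation \<Rightarrow> real^'f^'h \<Rightarrow> real^'h^'h \<Rightarrow> real^'h \<Rightarrow> real
     \<Rightarrow> 'l \<Rightarrow> real^'l^'f \<Rightarrow> real^'l^'h \<Rightarrow> real" where
  "sample_loss \<sigma> m r b v eps cs xi =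
     (\<Sum>l\<in>UNIV. ((if l = eps then 1 else 0)
        - (1 / real CARD('h)) * (\<Sum>h\<in>UNIV. \<sigma> (scores m r cs xi) b v h l))\<^sup>2)"

definition chistar_density :: "'l \<Rightarrow> real^'f \<Rightarrow> real^'l^'f \<Rightarrow> real" where
  "chistar_density eps theta cs =
     (\<Prod>f\<in>UNIV. \<Prod>l\<in>UNIV. normal_density (if l = eps then theta$f else 0) 1 (cs$f$l))"

definition xi_density :: "real^'l^'h \<Rightarrow> real" where
  "xi_density xi = (\<Prod>h\<in>UNIV. \<Prod>l\<in>UNIV. std_normal_density (xi$h$l))"

text \<open>Reparameterized loss: eps ~ Unif('l), theta ~ P, then chi*, xi conditionally independent Gaussians.\<close>
definition reparam_loss ::
  "('l::finite,'h::finite) activation \<Rightarrow> (real^'f::finite) measure \<Rightarrow> real^'f^'h \<Rightarrow> real^'h^'h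
     \<Rightarrow> real^'h \<Rightarrow> real \<Rightarrow> real" where
  "reparam_loss \<sigma> P m r b v =
     (1 / real CARD('l)) * (\<Sum>eps\<in>UNIV.
        \<integral>theta. (\<integral>cs. (\<integral>xi. sample_loss \<sigma> m r b v eps cs xi * chistar_density eps theta cs
                                 * xi_density xi \<partial>lborel) \<partial>lborel) \<partial>P)"

end

theory Submission
  imports Defs
begin

interpretation lb: product_sigma_finite "\<lambda>_::'a. lborel::real measure"
  by standard

lemma sum_Basis_inner:
  fixes y :: "'a::euclidean_space \<Rightarrow> real"
  assumes "b \<in> Basis"
  shows "(\<Sum>b'\<in>Basis. y b' *\<^sub>R b') \<bullet> b = y b"
  using assms by (simp add: inner_sum_left inner_Basis if_distrib cong: if_cong)

lemma lborel_prod: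
  fixes f :: "'a::euclidean_space \<Rightarrow> real \<Rightarrow> real"
  assumes int: "\<And>b. b \<in> Basis \<Longrightarrow> integrable lborel (f b)"
  shows "integrable lborel (\<lambda>x::'a. \<Prod>b\<in>Basis. f b (x \<bullet> b))"
    and "(\<integral>x. (\<Prod>b\<in>Basis. f b (x \<bullet> b)) \<partial>(lborel::'a measure)) = (\<Prod>b\<in>Basis. \<integral>t. f b t \<partial>lborel)"
proof -
  have eq: "(lborel::'a measure) = distr (\<Pi>\<^sub>M b\<in>Basis. lborel) borel (\<lambda>f. \<Sum>b\<in>Basis. f b *\<^sub>R b)"
    by (rule lborel_eq)
  have mf[measurable]: "f b \<in> borel_measurable borel" if "b \<in> Basis" for b
    using int[OF that] by auto
  have meas: "(\<lambda>x::'a. \<Prod>b\<in>Basis. f b (x \<bullet> b)) \<in> borel_measurable borel"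
    by measurable
  have mapm: "(\<lambda>f. \<Sum>b\<in>Basis. f b *\<^sub>R b) \<in> (\<Pi>\<^sub>M b\<in>Basis. lborel) \<rightarrow>\<^sub>M (borel :: 'a measure)"
    by measurable
  have cong: "(\<Prod>b\<in>Basis. f b ((\<Sum>b'\<in>Basis. y b' *\<^sub>R b') \<bullet> b)) = (\<Prod>b\<in>Basis. f b (y b))" for y
    by (intro prod.cong refl) (simp add: sum_Basis_inner)
  have ip: "integrable (\<Pi>\<^sub>M b\<in>Basis. lborel) (\<lambda>y. \<Prod>b\<in>Basis. f b (y b))"
    by (rule lb.product_integrable_prod) (auto intro: int)
  show "integrable lborel (\<lambda>x::'a. \<Prod>b\<in>Basis. f b (x \<bullet> b))"
    apply (subst eq)
    apply (subst integrable_distr_eq[OF mapm meas])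
    using ip by (simp add: cong)
  show "(\<integral>x. (\<Prod>b\<in>Basis. f b (x \<bullet> b)) \<partial>(lborel::'a measure)) = (\<Prod>b\<in>Basis. \<integral>t. f b t \<partial>lborel)"
    apply (subst eq)
    apply (subst integral_distr[OF mapm meas])
    apply (simp add: cong)
    by (rule lb.product_integral_prod) (auto intro: int)
qed

lemma Basis_vec2_cases:
  assumes "b \<in> (Basis :: (real^'l::finite^'h::finite) set)"
  obtains h l where "b = axis h (axis l (1::real))"
  using assms by (auto simp: Basis_vec_def)

lemma axis2_in_Basis: "axis h (axis l (1::real)) \<in> (Basis :: (real^'l::finite^'h::finite) set)"
  by (auto simp: Basis_vec_def)

lemma inner_axis2: "(x::real^'l::finite^'h::finite) \<bullet> axis h (axis l (1::real)) = x$h$l"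
  by (simp add: inner_axis)

lemma vec2_prod:
  fixes g :: "'h::finite \<Rightarrow> 'l::finite \<Rightarrow> real \<Rightarrow> real"
  assumes int: "\<And>h l. integrable lborel (g h l)"
  shows "integrable lborel (\<lambda>x::real^'l^'h. \<Prod>h\<in>UNIV. \<Prod>l\<in>UNIV. g h l (x$h$l))"
    and "(\<integral>x. (\<Prod>h\<in>UNIV. \<Prod>l\<in>UNIV. g h l (x$h$l)) \<partial>(lborel::(real^'l^'h) measure))
          = (\<Prod>h\<in>UNIV. \<Prod>l\<in>UNIV. \<integral>t. g h l t \<partial>lborel)"
proof -
  define f :: "real^'l^'h \<Rightarrow> real \<Rightarrow> real" where
    "f b t = (\<Prod>h\<in>UNIV. \<Prod>l\<in>UNIV. if b = axis h (axis l (1::real)) then g h l t else 1)" for b t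
  have fax: "f (axis h0 (axis l0 1)) = g h0 l0" for h0 l0
  proof
    fix t
    have "f (axis h0 (axis l0 1)) t = (\<Prod>h\<in>UNIV. \<Prod>l\<in>UNIV. if h = h0 \<and> l = l0 then g h l t else 1)"
      unfolding f_def by (intro prod.cong refl) (auto simp: axis_eq_axis)
    also have "\<dots> = (\<Prod>h\<in>UNIV. if h = h0 then (\<Prod>l\<in>UNIV. if l = l0 then g h l t else 1) else 1)"
      by (intro prod.cong refl) auto
    also have "\<dots> = g h0 l0 t" by simp
    finally show "f (axis h0 (axis l0 1)) t = g h0 l0 t" .
  qed
  have intf: "integrable lborel (f b)" if "b \<in> Basis" for b
    using that by (elim Basis_vec2_cases) (simp add: fax int)
  have eqp: "(\<Prod>b\<in>Basis. f b (x \<bullet> b)) = (\<Prod>h\<in>UNIV. \<Prod>l\<in>UNIV. g h l (x$h$l))" for x :: "real^'l^'h"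
  proof -
    have "(\<Prod>b\<in>Basis. f b (x \<bullet> b)) =
        (\<Prod>b\<in>Basis. \<Prod>h\<in>UNIV. \<Prod>l\<in>UNIV. if b = axis h (axis l (1::real)) then g h l (x \<bullet> b) else 1)"
      unfolding f_def by simp
    also have "\<dots> = (\<Prod>h\<in>UNIV. \<Prod>l\<in>UNIV. \<Prod>b\<in>Basis. if b = axis h (axis l (1::real)) then g h l (x \<bullet> b) else 1)"
      by (subst prod.swap) (subst prod.swap, rule refl)
    also have "\<dots> = (\<Prod>h\<in>UNIV. \<Prod>l\<in>UNIV. g h l (x$h$l))"
      by (intro prod.cong refl) (simp add: axis2_in_Basis inner_axis2)
    finally show ?thesis .
  qed
  have eqi: "(\<Prod>b\<in>Basis. \<integral>t. f b t \<partial>lborel) = (\<Prod>h\<in>UNIV. \<Prod>l\<in>UNIV. \<integral>t. g h l t \<partial>lborel)"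
  proof -
    have "(\<Prod>b\<in>Basis. \<integral>t. f b t \<partial>lborel) = (\<Prod>b\<in>Basis. \<Prod>h\<in>UNIV. \<Prod>l\<in>UNIV.
             if b = axis h (axis l (1::real)) then (\<integral>t. g h l t \<partial>lborel) else 1)"
    proof (rule prod.cong[OF refl])
      fix b :: "real^'l^'h" assume "b \<in> Basis"
      then obtain h0 l0 where b: "b = axis h0 (axis l0 1)" by (elim Basis_vec2_cases)
      have "(\<Prod>h\<in>UNIV. \<Prod>l\<in>UNIV. if b = axis h (axis l (1::real)) then (\<integral>t. g h l t \<partial>lborel) else 1)
          = (\<Prod>h\<in>UNIV. if h = h0 then (\<Prod>l\<in>UNIV. if l = l0 then (\<integral>t. g h l t \<partial>lborel) else 1) else 1)"
        unfolding b by (intro prod.cong refl) (auto simp: axis_eq_axis)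
      then show "(\<integral>t. f b t \<partial>lborel) = (\<Prod>h\<in>UNIV. \<Prod>l\<in>UNIV.
             if b = axis h (axis l (1::real)) then (\<integral>t. g h l t \<partial>lborel) else 1)"
        by (simp add: b fax)
    qed
    also have "\<dots> = (\<Prod>h\<in>UNIV. \<Prod>l\<in>UNIV. \<Prod>b\<in>Basis. if b = axis h (axis l (1::real)) then (\<integral>t. g h l t \<partial>lborel) else 1)"
      by (subst prod.swap) (subst prod.swap, rule refl)
    also have "\<dots> = (\<Prod>h\<in>UNIV. \<Prod>l\<in>UNIV. \<integral>t. g h l t \<partial>lborel)"
      by (intro prod.cong refl) (simp add: axis2_in_Basis)
    finally show ?thesis .
  qed
  show "integrable lborel (\<lambda>x::real^'l^'h. \<Prod>h\<in>UNIV. \<Prod>l\<in>UNIV. g h l (x$h$l))"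
    using lborel_prod(1)[of f, OF intf] by (simp add: eqp)
  show "(\<integral>x. (\<Prod>h\<in>UNIV. \<Prod>l\<in>UNIV. g h l (x$h$l)) \<partial>(lborel::(real^'l^'h) measure))
          = (\<Prod>h\<in>UNIV. \<Prod>l\<in>UNIV. \<integral>t. g h l t \<partial>lborel)"
    using lborel_prod(2)[of f, OF intf] by (simp add: eqp eqi)
qed

lemma ratio_lip:
  fixes a k :: "'i \<Rightarrow> real" and T :: "'i set"
  assumes T: "finite T" "p \<in> T" and al: "\<alpha> \<ge> 0" and kb: "\<And>i. i \<in> T \<Longrightarrow> \<bar>k i\<bar> \<le> K"
  shows "\<bar>exp (a p + k p) / (\<alpha> + (\<Sum>i\<in>T. exp (a i + k i))) - exp (a p) / (\<alpha> + (\<Sum>i\<in>T. exp (a i)))\<bar> \<le> 2 * K"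
proof -
  define D where "D t = \<alpha> + (\<Sum>i\<in>T. exp (a i + t * k i))" for t
  define N where "N t = exp (a p + t * k p)" for t
  define D' where "D' t = (\<Sum>i\<in>T. exp (a i + t * k i) * k i)" for t
  have Dpos: "D t > 0" for t
    unfolding D_def using T al by (intro add_nonneg_pos sum_pos) auto
  have NleD: "N t \<le> D t" for t
  proof -
    have "N t \<le> (\<Sum>i\<in>T. exp (a i + t * k i))"
      unfolding N_def using T by (intro member_le_sum) auto
    then show ?thesis unfolding D_def using al by linarith
  qed
  have der: "((\<lambda>t. N t / D t) has_real_derivative ((N t * k p) * D t - N t * D' t) / (D t * D t)) (at t)" for t
  proof -
    have dN: "(N has_real_derivative N t * k p) (at t)"
      unfolding N_def by (auto intro!: derivative_eq_intros)
    have dD: "(D has_real_derivative D' t) (at t)"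
      unfolding D_def D'_def by (auto intro!: derivative_eq_intros)
    show ?thesis using DERIV_divide[OF dN dD] Dpos[of t] by simp
  qed
  obtain z where z: "0 < z" "z < 1" and mvt: "N 1 / D 1 - N 0 / D 0 = (1 - 0) * (((N z * k p) * D z - N z * D' z) / (D z * D z))"
    using MVT2[of 0 1 "\<lambda>t. N t / D t" "\<lambda>t. ((N t * k p) * D t - N t * D' t) / (D t * D t)"] der by auto
  have K0: "K \<ge> 0" using kb[OF T(2)] by linarith
  have b1: "\<bar>N z * k p / D z\<bar> \<le> K"
  proof -
    have "\<bar>N z * k p / D z\<bar> = (N z / D z) * \<bar>k p\<bar>" using Dpos[of z] by (simp add: N_def abs_mult)
    also have "\<dots> \<le> 1 * K" using Dpos[of z] NleD[of z] kb[OF T(2)]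
      by (intro mult_mono) (auto simp: N_def)
    finally show ?thesis by simp
  qed
  have D'b: "\<bar>D' z\<bar> \<le> K * D z"
  proof -
    have "\<bar>D' z\<bar> \<le> (\<Sum>i\<in>T. \<bar>exp (a i + z * k i) * k i\<bar>)" unfolding D'_def by (rule sum_abs)
    also have "\<dots> \<le> (\<Sum>i\<in>T. exp (a i + z * k i) * K)"
      by (intro sum_mono) (auto simp: abs_mult intro!: mult_left_mono kb)
    also have "\<dots> = K * (\<Sum>i\<in>T. exp (a i + z * k i))" by (simp add: sum_distrib_left mult.commute)
    also have "\<dots> \<le> K * D z" unfolding D_def using al K0 by (intro mult_left_mono) auto
    finally show ?thesis .
  qed
  have b2: "\<bar>N z * D' z / (D z * D z)\<bar> \<le> K"
  proof -
    have "\<bar>N z * D' z / (D z * D z)\<bar> = (N z / D z) * (\<bar>D' z\<bar> / D z)"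
      using Dpos[of z] by (simp add: N_def abs_mult)
    also have "\<dots> \<le> 1 * K" using Dpos[of z] NleD[of z] D'b K0
      by (intro mult_mono) (auto simp: N_def divide_le_eq)
    finally show ?thesis by simp
  qed
  have eq: "((N z * k p) * D z - N z * D' z) / (D z * D z) = N z * k p / D z - N z * D' z / (D z * D z)"
    using Dpos[of z] by (simp add: field_simps)
  have "\<bar>N 1 / D 1 - N 0 / D 0\<bar> = \<bar>N z * k p / D z - N z * D' z / (D z * D z)\<bar>"
    using mvt unfolding eq by simp
  also have "\<dots> \<le> \<bar>N z * k p / D z\<bar> + \<bar>N z * D' z / (D z * D z)\<bar>" by (rule abs_triangle_ineq4)
  also have "\<dots> \<le> 2 * K" using b1 b2 by linarith
  finally have "\<bar>N 1 / D 1 - N 0 / D 0\<bar> \<le> 2 * K" .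
  then show ?thesis unfolding N_def D_def by simp
qed

lemma ratio_lip':
  fixes u w :: "'i \<Rightarrow> real"
  assumes T: "finite T" "p \<in> T" and al: "\<alpha> \<ge> 0" and kb: "\<And>i. i \<in> T \<Longrightarrow> \<bar>u i - w i\<bar> \<le> K"
  shows "\<bar>exp (u p) / (\<alpha> + (\<Sum>i\<in>T. exp (u i))) - exp (w p) / (\<alpha> + (\<Sum>i\<in>T. exp (w i)))\<bar> \<le> 2 * K"
  using ratio_lip[OF T al, of "\<lambda>i. u i - w i" K w] kb by simp

lemma ratio_bnd:
  fixes u :: "'i \<Rightarrow> real"
  assumes T: "finite T" "p \<in> T" and al: "\<alpha> \<ge> 0"
  shows "0 \<le> exp (u p) / (\<alpha> + (\<Sum>i\<in>T. exp (u i)))" "exp (u p) / (\<alpha> + (\<Sum>i\<in>T. exp (u i))) \<le> 1"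
proof -
  have s: "exp (u p) \<le> (\<Sum>i\<in>T. exp (u i))" using T by (intro member_le_sum) auto
  have "0 < exp (u p)" by simp
  then have pos: "\<alpha> + (\<Sum>i\<in>T. exp (u i)) > 0" using s al by linarith
  show "0 \<le> exp (u p) / (\<alpha> + (\<Sum>i\<in>T. exp (u i)))" using pos by simp
  show "exp (u p) / (\<alpha> + (\<Sum>i\<in>T. exp (u i))) \<le> 1" using pos s al by (simp add: divide_le_eq)
qed

lemma comp2_le_norm: "\<bar>(z::real^'l::finite^'h::finite)$h$l\<bar> \<le> norm z"
proof -
  have "\<bar>z$h$l\<bar> \<le> norm (z$h)" by (rule component_le_norm_cart)
  also have "\<dots> \<le> norm z" by (rule Finite_Cartesian_Product.norm_nth_le)
  finally show ?thesis .
qed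

lemma absfac: "(c::real) \<ge> 0 \<Longrightarrow> \<bar>c * X - c * Y\<bar> = c * \<bar>X - Y\<bar>"
  by (simp add: right_diff_distrib[symmetric] abs_mult)

lemma ratio_abs:
  fixes u :: "'i \<Rightarrow> real"
  assumes T: "finite T" "p \<in> T" and al: "\<alpha> \<ge> 0"
  shows "\<bar>exp (u p) / (\<alpha> + (\<Sum>i\<in>T. exp (u i)))\<bar> \<le> 1"
  using ratio_bnd[OF assms, of u] by (subst abs_of_nonneg) auto

definition actK :: "real \<Rightarrow> 'h itself \<Rightarrow> real" where
  "actK v (_::'h itself) = 1 + \<bar>v\<bar> + real CARD('h)"

lemma bayes_alt:
  "bayes_softmax (x::real^'l::finite^'h::finite) b v h l = real CARD('h) *
     (exp ((\<lambda>(i,j). x$i$j + b$i) (h,l)) / (0 + (\<Sum>q\<in>UNIV. exp ((\<lambda>(i,j). x$i$j + b$i) q))))"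
proof -
  have "(\<Sum>i\<in>UNIV. \<Sum>j\<in>UNIV. exp (x$i$j + b$i)) = (\<Sum>q\<in>UNIV \<times> UNIV. (\<lambda>(i,j). exp (x$i$j + b$i)) q)"
    by (rule sum.cartesian_product)
  also have "\<dots> = (\<Sum>q\<in>UNIV \<times> UNIV. exp ((\<lambda>(i,j). x$i$j + b$i) q))"
    by (intro sum.cong refl) (auto split: prod.split)
  also have "\<dots> = (\<Sum>q\<in>UNIV. exp ((\<lambda>(i,j). x$i$j + b$i) q))" by (simp only: UNIV_Times_UNIV)
  finally have s: "(\<Sum>i\<in>UNIV. \<Sum>j\<in>UNIV. exp (x$i$j + b$i)) = (\<Sum>q\<in>UNIV. exp ((\<lambda>(i,j). x$i$j + b$i) q))" .
  show ?thesis unfolding bayes_softmax_def s by simp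
qed

lemma act_lip:
  fixes \<sigma> :: "('l::finite,'h::finite) activation"
  assumes "\<sigma> \<in> {softmax, softmax1, bayes_softmax}"
  shows "\<bar>\<sigma> x b v h l - \<sigma> y b v h l\<bar> \<le> 2 * actK v TYPE('h) * norm (x - y)"
proof -
  have kb: "\<bar>x$i$j - y$i$j\<bar> \<le> norm (x - y)" for i j
    using comp2_le_norm[of "x - y" i j] by simp
  have n0: "norm (x - y) \<ge> 0" by simp
  have H1: "real CARD('h) \<ge> 1" by (simp add: Suc_le_eq)
  consider "\<sigma> = softmax" | "\<sigma> = softmax1" | "\<sigma> = bayes_softmax" using assms by auto
  then show ?thesis
  proof cases
    case 1
    have "\<bar>\<sigma> x b v h l - \<sigma> y b v h l\<bar> \<le> 2 * norm (x - y)"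
      using ratio_lip'[of UNIV l 0 "\<lambda>j. x$h$j" "\<lambda>j. y$h$j" "norm (x - y)"] kb
      by (simp add: 1 softmax_def)
    also have "\<dots> \<le> 2 * actK v TYPE('h) * norm (x - y)"
      using n0 by (intro mult_right_mono) (auto simp: actK_def)
    finally show ?thesis .
  next
    case 2
    have "\<bar>\<sigma> x b v h l - \<sigma> y b v h l\<bar> = \<bar>v\<bar> * \<bar>exp (x$h$l) / (exp (b$h) + (\<Sum>j\<in>UNIV. exp (x$h$j)))
        - exp (y$h$l) / (exp (b$h) + (\<Sum>j\<in>UNIV. exp (y$h$j)))\<bar>"
      by (simp add: 2 softmax1_def abs_mult[symmetric] right_diff_distrib)
    also have "\<dots> \<le> \<bar>v\<bar> * (2 * norm (x - y))"
      using ratio_lip'[of UNIV l "exp (b$h)" "\<lambda>j. x$h$j" "\<lambda>j. y$h$j" "norm (x - y)"] kb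
      by (intro mult_left_mono) auto
    also have "\<dots> = (2 * \<bar>v\<bar>) * norm (x - y)" by simp
    also have "\<dots> \<le> (2 * actK v TYPE('h)) * norm (x - y)"
      using n0 by (intro mult_right_mono) (auto simp: actK_def)
    finally show ?thesis .
  next
    case 3
    have "\<bar>\<sigma> x b v h l - \<sigma> y b v h l\<bar> = real CARD('h) *
        \<bar>exp ((\<lambda>(i,j). x$i$j + b$i) (h,l)) / (0 + (\<Sum>q\<in>UNIV. exp ((\<lambda>(i,j). x$i$j + b$i) q)))
        - exp ((\<lambda>(i,j). y$i$j + b$i) (h,l)) / (0 + (\<Sum>q\<in>UNIV. exp ((\<lambda>(i,j). y$i$j + b$i) q)))\<bar>"
      unfolding 3 bayes_alt by (rule absfac) simp
    also have "\<dots> \<le> real CARD('h) * (2 * norm (x - y))"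
      using ratio_lip'[of UNIV "(h,l)" 0 "\<lambda>(i,j). x$i$j + b$i" "\<lambda>(i,j). y$i$j + b$i" "norm (x - y)"] kb
      by (intro mult_left_mono) auto
    also have "\<dots> = (2 * real CARD('h)) * norm (x - y)" by simp
    also have "\<dots> \<le> (2 * actK v TYPE('h)) * norm (x - y)"
      using n0 by (intro mult_right_mono) (auto simp: actK_def)
    finally show ?thesis .
  qed
qed

lemma act_bnd:
  fixes \<sigma> :: "('l::finite,'h::finite) activation"
  assumes "\<sigma> \<in> {softmax, softmax1, bayes_softmax}"
  shows "\<bar>\<sigma> x b v h l\<bar> \<le> actK v TYPE('h)"
proof -
  consider "\<sigma> = softmax" | "\<sigma> = softmax1" | "\<sigma> = bayes_softmax" using assms by auto
  then show ?thesis
  proof cases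
    case 1
    then show ?thesis using ratio_bnd[of UNIV l 0 "\<lambda>j. x$h$j"]
      by (simp add: softmax_def actK_def)
  next
    case 2
    have "\<bar>\<sigma> x b v h l\<bar> = \<bar>v\<bar> * \<bar>exp (x$h$l) / (exp (b$h) + (\<Sum>j\<in>UNIV. exp (x$h$j)))\<bar>"
      by (simp only: 2 softmax1_def times_divide_eq_right[symmetric] abs_mult)
    also have "\<dots> \<le> \<bar>v\<bar> * 1"
      using ratio_abs[of UNIV l "exp (b$h)" "\<lambda>j. x$h$j"] by (intro mult_left_mono) auto
    finally show ?thesis by (simp add: actK_def)
  next
    case 3
    have "\<bar>\<sigma> x b v h l\<bar> = real CARD('h) *
        \<bar>exp ((\<lambda>(i,j). x$i$j + b$i) (h,l)) / (0 + (\<Sum>q\<in>UNIV. exp ((\<lambda>(i,j). x$i$j + b$i) q)))\<bar>"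
      unfolding 3 bayes_alt by (simp add: abs_mult del: split_paired_all)
    also have "\<dots> \<le> real CARD('h) * 1"
      using ratio_bnd[of UNIV "(h,l)" 0 "\<lambda>(i,j). x$i$j + b$i"] by (intro mult_left_mono) auto
    finally show ?thesis by (simp add: actK_def)
  qed
qed

definition lossf :: "('l::finite,'h::finite) activation \<Rightarrow> real^'h \<Rightarrow> real \<Rightarrow> 'l \<Rightarrow> real^'l^'h \<Rightarrow> real" where
  "lossf \<sigma> b v eps x = (\<Sum>l\<in>UNIV. ((if l = eps then 1 else 0)
        - (1 / real CARD('h)) * (\<Sum>h\<in>UNIV. \<sigma> x b v h l))\<^sup>2)"

lemma sample_loss_lossf: "sample_loss \<sigma> m r b v eps cs xi = lossf \<sigma> b v eps (scores m r cs xi)"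
  by (simp add: sample_loss_def lossf_def)

lemma bl_nth2: "bounded_linear (\<lambda>x::real^'l::finite^'h::finite. x$h$l)"
  using bounded_linear_compose[OF bounded_linear_vec_nth[of l] bounded_linear_vec_nth[of h]] by simp

lemma hd_nth2: "((\<lambda>x::real^'l::finite^'h::finite. x$h$l) has_derivative (\<lambda>d. d$h$l)) F"
  using bl_nth2 by (rule bounded_linear_imp_has_derivative)

lemma ite_abs: "\<bar>w\<bar> \<le> A \<Longrightarrow> \<bar>(if P then 1 else 0) - w\<bar> \<le> 1 + (A::real)"
  by (cases P) (auto simp: abs_le_iff)

lemma inner_term_bounds:
  fixes \<sigma> :: "('l::finite,'h::finite) activation"
  assumes s: "\<sigma> \<in> {softmax, softmax1, bayes_softmax}"
  shows "\<bar>(if l = eps then 1 else 0) - (1 / real CARD('h)) * (\<Sum>h\<in>UNIV. \<sigma> x b v h l)\<bar> \<le> 1 + actK v TYPE('h)"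
    and "\<bar>((if l = eps then 1 else 0) - (1 / real CARD('h)) * (\<Sum>h\<in>UNIV. \<sigma> x b v h l))
           - ((if l = eps then 1 else 0) - (1 / real CARD('h)) * (\<Sum>h\<in>UNIV. \<sigma> y b v h l))\<bar>
         \<le> 2 * actK v TYPE('h) * norm (x - y)"
proof -
  have Hp: "real CARD('h) > 0" by simp
  have "\<bar>(1 / real CARD('h)) * (\<Sum>h\<in>UNIV. \<sigma> x b v h l)\<bar> = (1 / real CARD('h)) * \<bar>\<Sum>h\<in>UNIV. \<sigma> x b v h l\<bar>"
    by (simp add: abs_mult)
  also have "\<dots> \<le> (1 / real CARD('h)) * (\<Sum>h\<in>(UNIV::'h set). actK v TYPE('h))"
    using Hp by (intro mult_left_mono order_trans[OF sum_abs] sum_mono act_bnd[OF s]) auto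
  also have "\<dots> = actK v TYPE('h)" using Hp by simp
  finally have a: "\<bar>(1 / real CARD('h)) * (\<Sum>h\<in>UNIV. \<sigma> x b v h l)\<bar> \<le> actK v TYPE('h)" .
  show "\<bar>(if l = eps then 1 else 0) - (1 / real CARD('h)) * (\<Sum>h\<in>UNIV. \<sigma> x b v h l)\<bar> \<le> 1 + actK v TYPE('h)"
    by (rule ite_abs[OF a])
  have "\<bar>((if l = eps then 1 else 0) - (1 / real CARD('h)) * (\<Sum>h\<in>UNIV. \<sigma> x b v h l))
           - ((if l = eps then 1 else 0) - (1 / real CARD('h)) * (\<Sum>h\<in>UNIV. \<sigma> y b v h l))\<bar>
       = \<bar>(1 / real CARD('h)) * (\<Sum>h\<in>UNIV. \<sigma> x b v h l - \<sigma> y b v h l)\<bar>"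
    by (simp add: sum_subtractf right_diff_distrib abs_minus_commute)
  also have "\<dots> = (1 / real CARD('h)) * \<bar>\<Sum>h\<in>UNIV. \<sigma> x b v h l - \<sigma> y b v h l\<bar>"
    by (simp add: abs_mult)
  also have "\<dots> \<le> (1 / real CARD('h)) * (\<Sum>h\<in>(UNIV::'h set). 2 * actK v TYPE('h) * norm (x - y))"
    using Hp by (intro mult_left_mono order_trans[OF sum_abs] sum_mono act_lip[OF s]) auto
  also have "\<dots> = 2 * actK v TYPE('h) * norm (x - y)" using Hp by simp
  finally show "\<bar>((if l = eps then 1 else 0) - (1 / real CARD('h)) * (\<Sum>h\<in>UNIV. \<sigma> x b v h l))
           - ((if l = eps then 1 else 0) - (1 / real CARD('h)) * (\<Sum>h\<in>UNIV. \<sigma> y b v h l))\<bar>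
         \<le> 2 * actK v TYPE('h) * norm (x - y)" .
qed

definition lossB :: "real \<Rightarrow> 'l itself \<Rightarrow> 'h itself \<Rightarrow> real" where
  "lossB v (_::'l itself) (_::'h itself) = real CARD('l) * (1 + actK v TYPE('h))\<^sup>2"

definition lossK :: "real \<Rightarrow> 'l itself \<Rightarrow> 'h itself \<Rightarrow> real" where
  "lossK v (_::'l itself) (_::'h itself) = real CARD('l) * (2 * (1 + actK v TYPE('h))) * (2 * actK v TYPE('h))"

lemma actK_pos: "actK v TYPE('h::finite) > 0"
  unfolding actK_def by (simp add: add_pos_nonneg)

lemma lossK_nonneg: "lossK v TYPE('l::finite) TYPE('h::finite) \<ge> 0"
  unfolding lossK_def using actK_pos[of v, where 'h='h] by simp

lemma sq_le: "\<bar>t::real\<bar> \<le> M \<Longrightarrow> \<bar>t\<^sup>2\<bar> \<le> M\<^sup>2"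
  by (metis abs_ge_zero abs_power2 power_abs power_mono)

lemma lossf_bnd:
  fixes \<sigma> :: "('l::finite,'h::finite) activation"
  assumes s: "\<sigma> \<in> {softmax, softmax1, bayes_softmax}"
  shows "\<bar>lossf \<sigma> b v eps x\<bar> \<le> lossB v TYPE('l) TYPE('h)"
proof -
  have "\<bar>lossf \<sigma> b v eps x\<bar> \<le> (\<Sum>l\<in>(UNIV::'l set). (1 + actK v TYPE('h))\<^sup>2)"
    unfolding lossf_def
  proof (intro order_trans[OF sum_abs] sum_mono)
    fix l :: 'l
    have "\<bar>(if l = eps then 1 else 0) - (1 / real CARD('h)) * (\<Sum>h\<in>UNIV. \<sigma> x b v h l)\<bar> \<le> 1 + actK v TYPE('h)"
      by (rule inner_term_bounds(1)[OF s])
    then show "\<bar>((if l = eps then 1 else 0) - (1 / real CARD('h)) * (\<Sum>h\<in>UNIV. \<sigma> x b v h l))\<^sup>2\<bar> \<le> (1 + actK v TYPE('h))\<^sup>2"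
      by (rule sq_le)
  qed
  then show ?thesis by (simp add: lossB_def)
qed

lemma sq_diff_bound:
  fixes a c M K :: real
  assumes "\<bar>a\<bar> \<le> M" "\<bar>c\<bar> \<le> M" "\<bar>a - c\<bar> \<le> K"
  shows "\<bar>a\<^sup>2 - c\<^sup>2\<bar> \<le> (2 * M) * K"
proof -
  have "\<bar>a\<^sup>2 - c\<^sup>2\<bar> = \<bar>a + c\<bar> * \<bar>a - c\<bar>" by (simp add: power2_eq_square algebra_simps abs_mult[symmetric])
  also have "\<dots> \<le> (2 * M) * K" using assms by (intro mult_mono) auto
  finally show ?thesis .
qed

lemma lossf_lip:
  fixes \<sigma> :: "('l::finite,'h::finite) activation"
  assumes s: "\<sigma> \<in> {softmax, softmax1, bayes_softmax}"
  shows "\<bar>lossf \<sigma> b v eps x - lossf \<sigma> b v eps y\<bar> \<le> lossK v TYPE('l) TYPE('h) * norm (x - y)"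
proof -
  have "\<bar>lossf \<sigma> b v eps x - lossf \<sigma> b v eps y\<bar> \<le>
      (\<Sum>l\<in>(UNIV::'l set). (2 * (1 + actK v TYPE('h))) * (2 * actK v TYPE('h) * norm (x - y)))"
    unfolding lossf_def sum_subtractf[symmetric]
    by (intro order_trans[OF sum_abs] sum_mono sq_diff_bound inner_term_bounds[OF s])
  then show ?thesis by (simp add: lossK_def)
qed

lemma lossf_cont:
  fixes \<sigma> :: "('l::finite,'h::finite) activation"
  assumes s: "\<sigma> \<in> {softmax, softmax1, bayes_softmax}"
  shows "continuous_on UNIV (lossf \<sigma> b v eps)"
proof (rule lipschitz_on_continuous_on)
  show "lipschitz_on (lossK v TYPE('l) TYPE('h)) UNIV (lossf \<sigma> b v eps)"
    unfolding lipschitz_on_def dist_norm using lossf_lip[OF s] lossK_nonneg by (auto simp: real_norm_def)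
qed

lemma act_diff:
  fixes \<sigma> :: "('l::finite,'h::finite) activation"
  assumes s: "\<sigma> \<in> {softmax, softmax1, bayes_softmax}"
  shows "\<exists>D. ((\<lambda>x. \<sigma> x b v h l) has_derivative D) (at A)"
proof -
  have p1: "(\<Sum>j\<in>UNIV. exp (x$h$j)) \<noteq> 0" for x :: "real^'l^'h"
    by (metis exp_gt_zero finite less_irrefl sum_pos UNIV_not_empty)
  have p2: "exp (b$h) + (\<Sum>j\<in>UNIV. exp (x$h$j)) \<noteq> 0" for x :: "real^'l^'h"
    by (smt (verit) exp_gt_zero sum_nonneg)
  have p3: "(1 / real CARD('h)) * (\<Sum>i\<in>UNIV. \<Sum>j\<in>UNIV. exp (x$i$j + b$i)) \<noteq> 0" for x :: "real^'l^'h"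
  proof -
    have "(\<Sum>i\<in>(UNIV::'h set). \<Sum>j\<in>(UNIV::'l set). exp (x$i$j + b$i)) > 0"
      by (intro sum_pos) auto
    then show ?thesis by simp
  qed
  have p4: "(\<Sum>i\<in>UNIV. \<Sum>j\<in>UNIV. exp (x$i$j + b$i)) \<noteq> 0" for x :: "real^'l^'h"
  proof -
    have "(\<Sum>i\<in>(UNIV::'h set). \<Sum>j\<in>(UNIV::'l set). exp (x$i$j + b$i)) > 0"
      by (intro sum_pos) auto
    then show ?thesis by simp
  qed
  consider "\<sigma> = softmax" | "\<sigma> = softmax1" | "\<sigma> = bayes_softmax" using assms by auto
  then show ?thesis
  proof cases
    case 1 show ?thesis unfolding 1 softmax_def
      by (rule exI) (auto intro!: derivative_eq_intros hd_nth2 p1)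
  next
    case 2 show ?thesis unfolding 2 softmax1_def
      by (rule exI) (auto intro!: derivative_eq_intros hd_nth2 p2)
  next
    case 3 show ?thesis unfolding 3 bayes_softmax_def
      by (rule exI) (auto intro!: derivative_eq_intros hd_nth2 p3 p4)
  qed
qed

lemma lossf_diff:
  fixes \<sigma> :: "('l::finite,'h::finite) activation"
  assumes s: "\<sigma> \<in> {softmax, softmax1, bayes_softmax}"
  shows "\<exists>D. (lossf \<sigma> b v eps has_derivative D) (at A)"
proof -
  have "\<forall>hl. \<exists>D. ((\<lambda>x. \<sigma> x b v (fst hl) (snd hl)) has_derivative D) (at A)"
    using act_diff[OF s] by blast
  then obtain D where D: "\<And>h l. ((\<lambda>x. \<sigma> x b v h l) has_derivative D (h, l)) (at A)"
    by (metis choice fst_conv snd_conv)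
  show ?thesis unfolding lossf_def[abs_def]
    by (rule exI) (auto intro!: derivative_eq_intros D)
qed

lemma meas_nth2[measurable]: "(\<lambda>x::real^'l::finite^'h::finite. x$h$l) \<in> borel_measurable borel"
  by (intro borel_measurable_continuous_onI continuous_intros)

lemma xi_density_cont: "continuous_on UNIV (xi_density :: real^'l::finite^'h::finite \<Rightarrow> real)"
  unfolding xi_density_def[abs_def] normal_density_def by (intro continuous_intros) auto

lemma xi_density_meas[measurable]: "(xi_density :: real^'l::finite^'h::finite \<Rightarrow> real) \<in> borel_measurable borel"
  by (rule borel_measurable_continuous_onI[OF xi_density_cont])

lemma xi_density_nonneg: "xi_density x \<ge> 0"
  unfolding xi_density_def by (intro prod_nonneg) auto

lemma xi_density_int: "integrable lborel (xi_density :: real^'l::finite^'h::finite \<Rightarrow> real)"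
  using vec2_prod(1)[of "\<lambda>h l. std_normal_density"] unfolding xi_density_def[abs_def] by simp

lemma xi_density_integral: "(\<integral>x. xi_density x \<partial>(lborel :: (real^'l::finite^'h::finite) measure)) = 1"
  using vec2_prod(2)[of "\<lambda>h l. std_normal_density"] unfolding xi_density_def[abs_def] by simp

lemma xi_comp_int:
  "integrable lborel (\<lambda>x::real^'l::finite^'h::finite. \<bar>x$h0$l0\<bar> * xi_density x)"
proof -
  define g where "g h l t = (if h = h0 \<and> l = l0 then \<bar>t\<bar> else 1) * std_normal_density t" for h l t
  have gi: "integrable lborel (g h l)" for h l
    using integrable_std_normal_moment_abs[of 1]
    by (cases "h = h0 \<and> l = l0") (auto simp: g_def[abs_def] mult.commute)
  have eq: "(\<Prod>h\<in>UNIV. \<Prod>l\<in>UNIV. g h l (x$h$l)) = \<bar>x$h0$l0\<bar> * xi_density x" for x :: "real^'l^'h"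
  proof -
    have "(\<Prod>h\<in>UNIV. \<Prod>l\<in>UNIV. g h l (x$h$l)) =
        (\<Prod>h\<in>UNIV. \<Prod>l\<in>UNIV. (if h = h0 \<and> l = l0 then \<bar>x$h$l\<bar> else 1)) * xi_density x"
      unfolding g_def xi_density_def prod.distrib by simp
    also have "(\<Prod>h\<in>UNIV. \<Prod>l\<in>UNIV. (if h = h0 \<and> l = l0 then \<bar>x$h$l\<bar> else 1)) =
        (\<Prod>h\<in>UNIV. if h = h0 then (\<Prod>l\<in>UNIV. if l = l0 then \<bar>x$h$l\<bar> else 1) else 1)"
      by (intro prod.cong refl) auto
    also have "\<dots> = \<bar>x$h0$l0\<bar>" by simp
    finally show ?thesis .
  qed
  show ?thesis using vec2_prod(1)[of g, OF gi] by (simp add: eq)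
qed

lemma norm_le_l1_2: "norm (x::real^'l::finite^'h::finite) \<le> (\<Sum>h\<in>UNIV. \<Sum>l\<in>UNIV. \<bar>x$h$l\<bar>)"
proof -
  have "norm x \<le> (\<Sum>h\<in>UNIV. \<bar>norm (x$h)\<bar>)"
    unfolding norm_vec_def by (simp add: L2_set_le_sum)
  also have "\<dots> \<le> (\<Sum>h\<in>UNIV. \<Sum>l\<in>UNIV. \<bar>x$h$l\<bar>)"
    by (intro sum_mono) (simp add: norm_le_l1_cart real_norm_def)
  finally show ?thesis .
qed

lemma xi_norm_int: "integrable lborel (\<lambda>x::real^'l::finite^'h::finite. norm x * xi_density x)"
proof (rule Bochner_Integration.integrable_bound)
  show "integrable lborel (\<lambda>x::real^'l^'h. \<Sum>h\<in>UNIV. \<Sum>l\<in>UNIV. \<bar>x$h$l\<bar> * xi_density x)"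
    by (intro Bochner_Integration.integrable_sum xi_comp_int)
  show "(\<lambda>x::real^'l^'h. norm x * xi_density x) \<in> borel_measurable lborel" by measurable
  show "AE x in (lborel::(real^'l^'h) measure). norm (norm x * xi_density x) \<le> norm (\<Sum>h\<in>UNIV. \<Sum>l\<in>UNIV. \<bar>x$h$l\<bar> * xi_density x)"
  proof (intro AE_I2)
    fix x :: "real^'l^'h" assume "x \<in> space lborel"
    have "norm (norm x * xi_density x) = norm x * xi_density x" using xi_density_nonneg[of x] by simp
    also have "\<dots> \<le> (\<Sum>h\<in>UNIV. \<Sum>l\<in>UNIV. \<bar>x$h$l\<bar>) * xi_density x"
      by (intro mult_right_mono norm_le_l1_2 xi_density_nonneg)
    also have "\<dots> = (\<Sum>h\<in>UNIV. \<Sum>l\<in>UNIV. \<bar>x$h$l\<bar> * xi_density x)" by (simp add: sum_distrib_right)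
    also have "\<dots> \<le> norm (\<Sum>h\<in>UNIV. \<Sum>l\<in>UNIV. \<bar>x$h$l\<bar> * xi_density x)" by simp
    finally show "norm (norm x * xi_density x) \<le> norm (\<Sum>h\<in>UNIV. \<Sum>l\<in>UNIV. \<bar>x$h$l\<bar> * xi_density x)" .
  qed
qed

lemma xi_density_uminus: "xi_density (- x) = xi_density x"
  unfolding xi_density_def by (simp add: normal_density_def)

lemma lborel_uminus_eq: "distr lborel borel uminus = (lborel :: 'a::euclidean_space measure)"
  using lborel_affine[of "-1::real" "0::'a"] by (simp add: density_1)

lemma integral_odd_zero:
  fixes g :: "'a::euclidean_space \<Rightarrow> real"
  assumes [measurable]: "g \<in> borel_measurable borel" and odd: "\<And>x. g (- x) = - g x"
  shows "(\<integral>x. g x \<partial>lborel) = 0"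
proof -
  have "(\<integral>x. g x \<partial>lborel) = (\<integral>x. g x \<partial>(distr lborel borel uminus))" by (simp add: lborel_uminus_eq)
  also have "\<dots> = (\<integral>x. g (- x) \<partial>lborel)" by (subst integral_distr) auto
  also have "\<dots> = - (\<integral>x. g x \<partial>lborel)" by (simp add: odd)
  finally show ?thesis by simp
qed

lemma chistar_alt: "chistar_density eps theta cs =
  (\<Prod>f\<in>UNIV. \<Prod>l\<in>UNIV. normal_density ((if l = eps then 1 else 0) * theta$f) 1 (cs$f$l))"
  unfolding chistar_density_def by (intro prod.cong refl) auto

lemma chistar_cont: "continuous_on UNIV (\<lambda>p. chistar_density eps (fst p) (snd p :: real^'l::finite^'f::finite))"
  unfolding chistar_alt normal_density_def by (intro continuous_intros) auto

lemma chistar_nonneg: "chistar_density eps theta cs \<ge> 0"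
  unfolding chistar_density_def by (intro prod_nonneg) auto

lemma chistar_int: "integrable lborel (chistar_density eps theta :: real^'l::finite^'f::finite \<Rightarrow> real)"
  using vec2_prod(1)[of "\<lambda>f l. normal_density (if l = eps then theta$f else 0) 1"]
  unfolding chistar_density_def[abs_def] by simp

lemma chistar_integral: "(\<integral>cs. chistar_density eps theta cs \<partial>(lborel :: (real^'l::finite^'f::finite) measure)) = 1"
  using vec2_prod(2)[of "\<lambda>f l. normal_density (if l = eps then theta$f else 0) 1"]
  unfolding chistar_density_def[abs_def] by simp

lemma chistar_meas[measurable]: "chistar_density eps theta \<in> borel_measurable (borel :: (real^'l::finite^'f::finite) measure)"
proof -
  have "continuous_on UNIV (chistar_density eps theta :: real^'l^'f \<Rightarrow> real)"
    unfolding chistar_alt[abs_def] normal_density_def by (intro continuous_intros) auto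
  then show ?thesis by (rule borel_measurable_continuous_onI)
qed

definition Rm :: "real^'h^'h \<Rightarrow> real^'l^'h \<Rightarrow> real^'l^'h" where
  "Rm r xi = (\<chi> h l. \<Sum>h'\<in>UNIV. r$h$h' * xi$h'$l)"

definition Am :: "real^'f^'h \<Rightarrow> real^'l^'f \<Rightarrow> real^'l^'h" where
  "Am m cs = (\<chi> h l. \<Sum>f\<in>UNIV. m$h$f * cs$f$l)"

lemma scores_split: "scores m r cs xi = Am m cs + Rm r xi"
  unfolding scores_def Am_def Rm_def by (simp add: vec_eq_iff)

lemma Rm_zero[simp]: "Rm 0 xi = 0"
  unfolding Rm_def by (simp add: vec_eq_iff)

lemma Rm_uminus: "Rm r (- xi) = - Rm r xi"
  unfolding Rm_def by (simp add: vec_eq_iff sum_negf)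

definition Cs :: "'h itself \<Rightarrow> 'l itself \<Rightarrow> real" where
  "Cs (_::'h itself) (_::'l itself) = real (CARD('h) * CARD('l) * CARD('h))"

lemma Cs_pos: "Cs TYPE('h::finite) TYPE('l::finite) > 0"
  unfolding Cs_def by simp

lemma Rm_norm: "norm (Rm r (xi::real^'l::finite^'h::finite)) \<le> Cs TYPE('h) TYPE('l) * norm r * norm xi"
proof -
  have "norm (Rm r xi) \<le> (\<Sum>h\<in>UNIV. \<Sum>l\<in>UNIV. \<bar>(Rm r xi)$h$l\<bar>)" by (rule norm_le_l1_2)
  also have "\<dots> \<le> (\<Sum>h\<in>(UNIV::'h set). \<Sum>l\<in>(UNIV::'l set). \<Sum>h'\<in>(UNIV::'h set). norm r * norm xi)"
  proof (intro sum_mono)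
    fix h l
    have "\<bar>(Rm r xi)$h$l\<bar> \<le> (\<Sum>h'\<in>UNIV. \<bar>r$h$h' * xi$h'$l\<bar>)" unfolding Rm_def by (simp add: sum_abs)
    also have "\<dots> \<le> (\<Sum>h'\<in>(UNIV::'h set). norm r * norm xi)"
      unfolding abs_mult by (intro sum_mono mult_mono comp2_le_norm) auto
    finally show "\<bar>(Rm r xi)$h$l\<bar> \<le> (\<Sum>h'\<in>(UNIV::'h set). norm r * norm xi)" .
  qed
  also have "\<dots> = Cs TYPE('h) TYPE('l) * norm r * norm xi" by (simp add: Cs_def)
  finally show ?thesis .
qed

lemma Rm_cont: "continuous_on UNIV (Rm r)"
  unfolding Rm_def by (intro continuous_intros)

lemma Rm_cont2: "continuous_on UNIV (\<lambda>p. Rm r (snd p))"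
  unfolding Rm_def by (intro continuous_intros)

lemma Am_cont: "continuous_on UNIV (\<lambda>p. Am m (fst p))"
  unfolding Am_def by (intro continuous_intros)

lemma lift_limit:
  fixes h :: "'r::real_normed_vector \<Rightarrow> 'a \<Rightarrow> real" and B :: "'a \<Rightarrow> real"
  assumes int: "\<And>r. integrable M (h r)"
    and lim: "\<And>x. ((\<lambda>r. (h r x - h 0 x) / norm r) \<longlongrightarrow> 0) (at 0)"
    and bnd: "\<And>r x. \<bar>h r x - h 0 x\<bar> \<le> norm r * B x"
    and intB: "integrable M B"
  shows "((\<lambda>r. ((\<integral>x. h r x \<partial>M) - (\<integral>x. h 0 x \<partial>M)) / norm r) \<longlongrightarrow> 0) (at 0)"
proof (subst tendsto_at_iff_sequentially, intro allI impI)
  fix X :: "nat \<Rightarrow> 'r" assume X0: "\<forall>i. X i \<in> UNIV - {0}" and XL: "X \<longlonglongrightarrow> 0"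
  define s where "s n x = (h (X n) x - h 0 x) / norm (X n)" for n x
  have fl: "filterlim X (at 0) sequentially"
    using X0 XL by (auto simp: filterlim_at)
  have "(\<lambda>n. \<integral>x. s n x \<partial>M) \<longlonglongrightarrow> (\<integral>x. 0 \<partial>M)"
  proof (rule integral_dominated_convergence[where w=B])
    show "(\<lambda>x. 0::real) \<in> borel_measurable M" by simp
    show "s n \<in> borel_measurable M" for n
      unfolding s_def using int by (intro borel_measurable_divide borel_measurable_diff) auto
    show "integrable M B" by fact
    show "AE x in M. (\<lambda>n. s n x) \<longlonglongrightarrow> 0"
      unfolding s_def using filterlim_compose[OF lim fl] by (auto simp: o_def)
    show "AE x in M. norm (s n x) \<le> B x" for n
    proof -
      have "norm (X n) > 0" using X0 by auto
      then show ?thesis unfolding s_def using bnd[of "X n"]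
        by (auto simp: divide_le_eq mult.commute)
    qed
  qed
  moreover have "(\<integral>x. s n x \<partial>M) = ((\<integral>x. h (X n) x \<partial>M) - (\<integral>x. h 0 x \<partial>M)) / norm (X n)" for n
    unfolding s_def by (simp add: int)
  ultimately show "((\<lambda>r. ((\<integral>x. h r x \<partial>M) - (\<integral>x. h 0 x \<partial>M)) / norm r) \<circ> X) \<longlonglongrightarrow> 0"
    by (simp add: o_def)
qed

lemma deriv_compose_lim:
  fixes f :: "'a::real_normed_vector \<Rightarrow> real" and R :: "'r::real_normed_vector \<Rightarrow> 'a"
  assumes D: "(f has_derivative D) (at A)"
    and Rb: "\<And>r. norm (R r) \<le> C * norm r" and C: "C \<ge> 0"
  shows "((\<lambda>r. (f (A + R r) - f A - D (R r)) / norm r) \<longlongrightarrow> 0) (at 0)"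
proof (rule tendstoI)
  fix e :: real assume e: "e > 0"
  define e' where "e' = e / (C + 1)"
  have e': "e' > 0" using e C by (simp add: e'_def)
  obtain d where d: "d > 0" and dd: "\<And>y. norm (y - A) < d \<Longrightarrow> norm (f y - f A - D (y - A)) \<le> e' * norm (y - A)"
    using D e' unfolding has_derivative_at_alt by blast
  show "\<forall>\<^sub>F r in at 0. dist ((f (A + R r) - f A - D (R r)) / norm r) 0 < e"
    unfolding eventually_at
  proof (intro exI[of _ "d / (C + 1)"] conjI ballI impI)
    show "d / (C + 1) > 0" using d C by simp
    fix r :: 'r assume "r \<in> UNIV" "r \<noteq> 0 \<and> dist r 0 < d / (C + 1)"
    then have r0: "r \<noteq> 0" and rd: "norm r < d / (C + 1)" by auto
    have nr: "norm r > 0" using r0 by simp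
    have "norm (R r) \<le> C * norm r" by (rule Rb)
    also have "\<dots> \<le> (C + 1) * norm r" using nr by simp
    also have "\<dots> < d" using rd C by (simp add: field_simps)
    finally have "norm (R r) < d" .
    then have "\<bar>f (A + R r) - f A - D (R r)\<bar> \<le> e' * norm (R r)" using dd[of "A + R r"] by simp
    also have "\<dots> \<le> e' * (C * norm r)" using e' Rb by (intro mult_left_mono) auto
    finally have b: "\<bar>f (A + R r) - f A - D (R r)\<bar> \<le> e' * C * norm r" by simp
    have "\<bar>(f (A + R r) - f A - D (R r)) / norm r\<bar> \<le> e' * C"
      using b nr by (simp add: divide_le_eq)
    also have "e' * C < e" using e C by (simp add: e'_def field_simps)
    finally show "dist ((f (A + R r) - f A - D (R r)) / norm r) 0 < e" by simp
  qed
qed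

definition Jf :: "('l::finite,'h::finite) activation \<Rightarrow> real^'h \<Rightarrow> real \<Rightarrow> 'l \<Rightarrow> real^'f^'h \<Rightarrow> real^'h^'h
    \<Rightarrow> real^'l^'f \<Rightarrow> real" where
  "Jf \<sigma> b v eps m r cs = (\<integral>xi. lossf \<sigma> b v eps (scores m r cs xi) * xi_density xi \<partial>lborel)"

lemma cont_meas: "continuous_on UNIV f \<Longrightarrow> f \<in> borel_measurable lborel"
  by (simp add: borel_measurable_continuous_onI)

lemma lvl1_cont:
  fixes \<sigma> :: "('l::finite,'h::finite) activation"
  assumes s: "\<sigma> \<in> {softmax, softmax1, bayes_softmax}"
  shows "continuous_on UNIV (\<lambda>xi::real^'l^'h. lossf \<sigma> b v eps (y + Rm r xi) * xi_density xi)"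
  by (intro continuous_on_mult continuous_on_compose2[OF lossf_cont[OF s]] xi_density_cont
      continuous_intros Rm_cont) auto

lemma lvl1_int:
  fixes \<sigma> :: "('l::finite,'h::finite) activation"
  assumes s: "\<sigma> \<in> {softmax, softmax1, bayes_softmax}"
  shows "integrable lborel (\<lambda>xi::real^'l^'h. lossf \<sigma> b v eps (y + Rm r xi) * xi_density xi)"
proof (rule Bochner_Integration.integrable_bound)
  show "integrable lborel (\<lambda>xi::real^'l^'h. lossB v TYPE('l) TYPE('h) * xi_density xi)"
    by (intro integrable_mult_right xi_density_int)
  show "(\<lambda>xi::real^'l^'h. lossf \<sigma> b v eps (y + Rm r xi) * xi_density xi) \<in> borel_measurable lborel"
    by (rule cont_meas[OF lvl1_cont[OF s]])
  show "AE xi in (lborel::(real^'l^'h) measure). norm (lossf \<sigma> b v eps (y + Rm r xi) * xi_density xi)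
      \<le> norm (lossB v TYPE('l) TYPE('h) * xi_density xi)"
  proof (intro AE_I2)
    fix xi :: "real^'l^'h"
    have B0: "lossB v TYPE('l) TYPE('h) \<ge> 0" unfolding lossB_def by simp
    show "norm (lossf \<sigma> b v eps (y + Rm r xi) * xi_density xi) \<le> norm (lossB v TYPE('l) TYPE('h) * xi_density xi)"
      using lossf_bnd[OF s, of b v eps "y + Rm r xi"] xi_density_nonneg[of xi] B0
      by (simp add: abs_mult mult_right_mono)
  qed
qed

lemma Jf_alt: "Jf \<sigma> b v eps m r cs = (\<integral>xi. lossf \<sigma> b v eps (Am m cs + Rm r xi) * xi_density xi \<partial>lborel)"
  unfolding Jf_def scores_split ..

definition M1 :: "'l::finite itself \<Rightarrow> 'h::finite itself \<Rightarrow> real" where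
  "M1 (_::'l itself) (_::'h itself) = (\<integral>xi. norm (xi::real^'l^'h) * xi_density xi \<partial>lborel)"

lemma M1_nonneg: "M1 TYPE('l::finite) TYPE('h::finite) \<ge> 0"
  unfolding M1_def by (intro integral_nonneg_AE AE_I2) (simp add: xi_density_nonneg)

lemma lvl1_bnd:
  fixes \<sigma> :: "('l::finite,'h::finite) activation"
  assumes s: "\<sigma> \<in> {softmax, softmax1, bayes_softmax}"
  shows "\<bar>Jf \<sigma> b v eps m r cs - Jf \<sigma> b v eps m 0 cs\<bar>
     \<le> norm r * (lossK v TYPE('l) TYPE('h) * Cs TYPE('h) TYPE('l) * M1 TYPE('l) TYPE('h))"
proof -
  define A where "A = Am m cs"
  define K where "K = lossK v TYPE('l) TYPE('h) * Cs TYPE('h) TYPE('l)"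
  have K0: "K \<ge> 0" unfolding K_def
    using lossK_nonneg[of v, where 'l='l and 'h='h] Cs_pos[where 'h='h and 'l='l] by simp
  define g where "g xi = (lossf \<sigma> b v eps (A + Rm r xi) - lossf \<sigma> b v eps (A + Rm 0 xi)) * xi_density xi"
    for xi :: "real^'l^'h"
  have gi: "integrable lborel g"
    unfolding g_def left_diff_distrib by (intro Bochner_Integration.integrable_diff lvl1_int[OF s])
  have "Jf \<sigma> b v eps m r cs - Jf \<sigma> b v eps m 0 cs = (\<integral>xi. g xi \<partial>lborel)"
    unfolding Jf_alt g_def left_diff_distrib A_def
    by (subst Bochner_Integration.integral_diff) (auto intro: lvl1_int[OF s] simp: xi_density_int)
  also have "\<bar>\<dots>\<bar> \<le> (\<integral>xi. \<bar>g xi\<bar> \<partial>lborel)"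
    using integral_norm_bound[of lborel g] by simp
  also have "\<dots> \<le> (\<integral>xi. norm r * K * (norm (xi::real^'l^'h) * xi_density xi) \<partial>lborel)"
  proof (rule Bochner_Integration.integral_mono)
    show "integrable lborel (\<lambda>xi. \<bar>g xi\<bar>)" using gi by (rule integrable_abs)
    show "integrable lborel (\<lambda>xi::real^'l^'h. norm r * K * (norm xi * xi_density xi))"
      by (intro integrable_mult_right xi_norm_int)
    fix xi :: "real^'l^'h"
    have "\<bar>g xi\<bar> = \<bar>lossf \<sigma> b v eps (A + Rm r xi) - lossf \<sigma> b v eps (A + Rm 0 xi)\<bar> * xi_density xi"
      unfolding g_def using xi_density_nonneg[of xi] by (simp add: abs_mult)
    also have "\<dots> \<le> (lossK v TYPE('l) TYPE('h) * norm (Rm r xi)) * xi_density xi"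
      using lossf_lip[OF s, of b v eps "A + Rm r xi" "A + Rm 0 xi"] xi_density_nonneg[of xi]
      by (intro mult_right_mono) auto
    also have "\<dots> \<le> (lossK v TYPE('l) TYPE('h) * (Cs TYPE('h) TYPE('l) * norm r * norm xi)) * xi_density xi"
      using Rm_norm[of r xi] xi_density_nonneg[of xi] lossK_nonneg[of v, where 'l='l and 'h='h]
      by (intro mult_right_mono mult_left_mono) auto
    also have "\<dots> = norm r * K * (norm xi * xi_density xi)" unfolding K_def by (simp add: algebra_simps)
    finally show "\<bar>g xi\<bar> \<le> norm r * K * (norm xi * xi_density xi)" .
  qed
  also have "\<dots> = norm r * (K * M1 TYPE('l) TYPE('h))" unfolding M1_def by simp
  finally show ?thesis unfolding K_def by simp
qed

lemma lvl1_lim: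
  fixes \<sigma> :: "('l::finite,'h::finite) activation" and m :: "real^'f::finite^'h"
  assumes s: "\<sigma> \<in> {softmax, softmax1, bayes_softmax}"
  shows "((\<lambda>r. (Jf \<sigma> b v eps m r cs - Jf \<sigma> b v eps m 0 cs) / norm r) \<longlongrightarrow> 0) (at 0)"
proof -
  define A where "A = Am m cs"
  define f where "f = lossf \<sigma> b v eps"
  obtain D where D: "(f has_derivative D) (at A)" using lossf_diff[OF s] unfolding f_def by blast
  have bl: "bounded_linear D" using D by (rule has_derivative_bounded_linear)
  have lin: "linear D" using bl by (rule bounded_linear.linear)
  obtain KD where KD: "KD > 0" "\<And>x. norm (D x) \<le> norm x * KD"
    using bounded_linear.pos_bounded[OF bl] by blast
  have Dc: "continuous_on UNIV D" using bl by (rule linear_continuous_on)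
  have fc: "continuous_on UNIV f" unfolding f_def by (rule lossf_cont[OF s])
  define h where "h r xi = (f (A + Rm r xi) - D (Rm r xi)) * xi_density xi"
    for r :: "real^'h^'h" and xi :: "real^'l^'h"
  have Ci: "Cs TYPE('h) TYPE('l) > 0" by (rule Cs_pos)
  have dint: "integrable lborel (\<lambda>xi::real^'l^'h. D (Rm r xi) * xi_density xi)" for r :: "real^'h^'h"
  proof (rule Bochner_Integration.integrable_bound)
    show "integrable lborel (\<lambda>xi::real^'l^'h. (KD * Cs TYPE('h) TYPE('l) * norm r) * (norm xi * xi_density xi))"
      by (intro integrable_mult_right xi_norm_int)
    show "(\<lambda>xi::real^'l^'h. D (Rm r xi) * xi_density xi) \<in> borel_measurable lborel"
      by (intro cont_meas continuous_on_mult continuous_on_compose2[OF Dc Rm_cont] xi_density_cont) auto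
    show "AE xi in (lborel::(real^'l^'h) measure). norm (D (Rm r xi) * xi_density xi)
        \<le> norm ((KD * Cs TYPE('h) TYPE('l) * norm r) * (norm xi * xi_density xi))"
    proof (intro AE_I2)
      fix xi :: "real^'l^'h"
      have "norm (D (Rm r xi) * xi_density xi) = norm (D (Rm r xi)) * xi_density xi"
        using xi_density_nonneg[of xi] by (simp add: abs_mult)
      also have "\<dots> \<le> (norm (Rm r xi) * KD) * xi_density xi"
        using KD(2) xi_density_nonneg[of xi] by (intro mult_right_mono) auto
      also have "\<dots> \<le> ((Cs TYPE('h) TYPE('l) * norm r * norm xi) * KD) * xi_density xi"
        using Rm_norm[of r xi] KD(1) xi_density_nonneg[of xi] by (intro mult_right_mono) auto
      also have "\<dots> = (KD * Cs TYPE('h) TYPE('l) * norm r) * (norm xi * xi_density xi)" by (simp add: algebra_simps)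
      also have "\<dots> \<le> norm ((KD * Cs TYPE('h) TYPE('l) * norm r) * (norm xi * xi_density xi))" by simp
      finally show "norm (D (Rm r xi) * xi_density xi)
        \<le> norm ((KD * Cs TYPE('h) TYPE('l) * norm r) * (norm xi * xi_density xi))" .
    qed
  qed
  have dzero: "(\<integral>xi. D (Rm r xi) * xi_density xi \<partial>(lborel::(real^'l^'h) measure)) = 0" for r :: "real^'h^'h"
  proof (rule integral_odd_zero)
    show "(\<lambda>xi::real^'l^'h. D (Rm r xi) * xi_density xi) \<in> borel_measurable borel"
      by (intro borel_measurable_continuous_onI continuous_on_mult continuous_on_compose2[OF Dc Rm_cont] xi_density_cont) auto
    fix xi :: "real^'l^'h"
    show "D (Rm r (- xi)) * xi_density (- xi) = - (D (Rm r xi) * xi_density xi)"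
      by (simp add: Rm_uminus linear_neg[OF lin] xi_density_uminus)
  qed
  have hint: "integrable lborel (h r)" for r
    unfolding h_def[abs_def] left_diff_distrib f_def
    by (intro Bochner_Integration.integrable_diff lvl1_int[OF s] dint)
  have hJ: "(\<integral>xi. h r xi \<partial>lborel) = Jf \<sigma> b v eps m r cs" for r
    unfolding h_def left_diff_distrib Jf_alt f_def A_def
    by (subst Bochner_Integration.integral_diff) (auto intro: lvl1_int[OF s] dint simp: dzero[unfolded f_def])
  have D0: "D 0 = 0" by (rule linear_0[OF lin])
  have h0: "h 0 xi = f A * xi_density xi" for xi by (simp add: h_def D0)
  define B where "B xi = ((lossK v TYPE('l) TYPE('h) + KD) * Cs TYPE('h) TYPE('l)) * (norm xi * xi_density xi)"
    for xi :: "real^'l^'h"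
  have lim: "((\<lambda>r. (h r xi - h 0 xi) / norm r) \<longlongrightarrow> 0) (at 0)" for xi
  proof -
    have eq: "(h r xi - h 0 xi) / norm r = ((f (A + Rm r xi) - f A - D (Rm r xi)) / norm r) * xi_density xi" for r
      by (simp add: h0 h_def D0 algebra_simps add_divide_distrib diff_divide_distrib)
    have "((\<lambda>r. ((f (A + Rm r xi) - f A - D (Rm r xi)) / norm r) * xi_density xi) \<longlongrightarrow> 0) (at 0)"
      by (intro tendsto_mult_left_zero deriv_compose_lim[OF D, where C="Cs TYPE('h) TYPE('l) * norm xi"])
         (use Rm_norm[of _ xi] Ci in \<open>auto simp: algebra_simps\<close>)
    then show ?thesis by (simp add: eq)
  qed
  have bnd: "\<bar>h r xi - h 0 xi\<bar> \<le> norm r * B xi" for r xi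
  proof -
    have e1: "h r xi - h 0 xi = (f (A + Rm r xi) - f A - D (Rm r xi)) * xi_density xi"
      by (simp add: h0 h_def D0 algebra_simps)
    have "\<bar>h r xi - h 0 xi\<bar> = \<bar>f (A + Rm r xi) - f A - D (Rm r xi)\<bar> * xi_density xi"
      unfolding e1 abs_mult using xi_density_nonneg[of xi] by simp
    also have "\<dots> \<le> (lossK v TYPE('l) TYPE('h) * norm (Rm r xi) + norm (Rm r xi) * KD) * xi_density xi"
    proof (intro mult_right_mono xi_density_nonneg)
      have "\<bar>f (A + Rm r xi) - f A\<bar> \<le> lossK v TYPE('l) TYPE('h) * norm (Rm r xi)"
        using lossf_lip[OF s, of b v eps "A + Rm r xi" A] unfolding f_def by simp
      moreover have "\<bar>D (Rm r xi)\<bar> \<le> norm (Rm r xi) * KD" using KD(2)[of "Rm r xi"] by simp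
      ultimately show "\<bar>f (A + Rm r xi) - f A - D (Rm r xi)\<bar> \<le> lossK v TYPE('l) TYPE('h) * norm (Rm r xi) + norm (Rm r xi) * KD"
        by linarith
    qed
    also have "\<dots> = ((lossK v TYPE('l) TYPE('h) + KD) * norm (Rm r xi)) * xi_density xi" by (simp add: algebra_simps)
    also have "\<dots> \<le> ((lossK v TYPE('l) TYPE('h) + KD) * (Cs TYPE('h) TYPE('l) * norm r * norm xi)) * xi_density xi"
      using Rm_norm[of r xi] KD(1) lossK_nonneg[of v, where 'l='l and 'h='h] xi_density_nonneg[of xi]
      by (intro mult_right_mono mult_left_mono) auto
    also have "\<dots> = norm r * B xi" by (simp add: B_def algebra_simps)
    finally show ?thesis .
  qed
  have intB: "integrable lborel B" unfolding B_def[abs_def] by (intro integrable_mult_right xi_norm_int)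
  have "((\<lambda>r. ((\<integral>xi. h r xi \<partial>lborel) - (\<integral>xi. h 0 xi \<partial>lborel)) / norm r) \<longlongrightarrow> 0) (at 0)"
    by (rule lift_limit[OF hint lim bnd intB])
  then show ?thesis by (simp add: hJ)
qed

lemma Jf_meas:
  fixes \<sigma> :: "('l::finite,'h::finite) activation" and m :: "real^'f::finite^'h"
  assumes s: "\<sigma> \<in> {softmax, softmax1, bayes_softmax}"
  shows "(\<lambda>cs. Jf \<sigma> b v eps m r cs) \<in> borel_measurable borel"
proof -
  have c: "continuous_on UNIV (\<lambda>p::(real^'l^'f) \<times> (real^'l^'h).
      lossf \<sigma> b v eps (Am m (fst p) + Rm r (snd p)) * xi_density (snd p))"
    by (intro continuous_on_mult continuous_on_compose2[OF lossf_cont[OF s]] continuous_intros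
        Am_cont Rm_cont2 continuous_on_compose2[OF xi_density_cont]) auto
  have "(\<lambda>(cs, xi). lossf \<sigma> b v eps (Am m cs + Rm r xi) * xi_density xi)
        \<in> borel_measurable (lborel \<Otimes>\<^sub>M (lborel :: (real^'l^'h) measure))"
    unfolding Lebesgue_Measure.lborel_prod measurable_lborel2 case_prod_beta'
    by (rule borel_measurable_continuous_onI[OF c])
  then have "(\<lambda>cs. \<integral>xi. lossf \<sigma> b v eps (Am m cs + Rm r xi) * xi_density xi \<partial>(lborel :: (real^'l^'h) measure))
      \<in> borel_measurable lborel"
    by (rule lborel.borel_measurable_lebesgue_integral)
  then show ?thesis unfolding Jf_alt[abs_def] by simp
qed

lemma Jf_bnd:
  fixes \<sigma> :: "('l::finite,'h::finite) activation" and m :: "real^'f::finite^'h"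
  assumes s: "\<sigma> \<in> {softmax, softmax1, bayes_softmax}"
  shows "\<bar>Jf \<sigma> b v eps m r cs\<bar> \<le> lossB v TYPE('l) TYPE('h)"
proof -
  have "\<bar>Jf \<sigma> b v eps m r cs\<bar> \<le> (\<integral>xi. \<bar>lossf \<sigma> b v eps (Am m cs + Rm r xi) * xi_density xi\<bar> \<partial>(lborel :: (real^'l^'h) measure))"
    unfolding Jf_alt using integral_norm_bound[of lborel "\<lambda>xi. lossf \<sigma> b v eps (Am m cs + Rm r xi) * xi_density xi"]
    by simp
  also have "\<dots> \<le> (\<integral>xi. lossB v TYPE('l) TYPE('h) * xi_density xi \<partial>(lborel :: (real^'l^'h) measure))"
  proof (rule Bochner_Integration.integral_mono)
    show "integrable lborel (\<lambda>xi::real^'l^'h. \<bar>lossf \<sigma> b v eps (Am m cs + Rm r xi) * xi_density xi\<bar>)"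
      by (intro integrable_abs lvl1_int[OF s])
    show "integrable lborel (\<lambda>xi::real^'l^'h. lossB v TYPE('l) TYPE('h) * xi_density xi)"
      by (intro integrable_mult_right xi_density_int)
    fix xi :: "real^'l^'h"
    show "\<bar>lossf \<sigma> b v eps (Am m cs + Rm r xi) * xi_density xi\<bar> \<le> lossB v TYPE('l) TYPE('h) * xi_density xi"
      using lossf_bnd[OF s, of b v eps "Am m cs + Rm r xi"] xi_density_nonneg[of xi]
      by (simp add: abs_mult mult_right_mono)
  qed
  also have "\<dots> = lossB v TYPE('l) TYPE('h)" by (simp add: xi_density_integral)
  finally show ?thesis .
qed

definition Wf :: "('l::finite,'h::finite) activation \<Rightarrow> real^'h \<Rightarrow> real \<Rightarrow> 'l \<Rightarrow> real^'f^'h \<Rightarrow> real^'h^'h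
    \<Rightarrow> real^'f::finite \<Rightarrow> real" where
  "Wf \<sigma> b v eps m r theta = (\<integral>cs. chistar_density eps theta cs * Jf \<sigma> b v eps m r cs \<partial>lborel)"

lemma lvl2_int:
  fixes \<sigma> :: "('l::finite,'h::finite) activation" and m :: "real^'f::finite^'h"
  assumes s: "\<sigma> \<in> {softmax, softmax1, bayes_softmax}"
  shows "integrable lborel (\<lambda>cs. chistar_density eps theta cs * Jf \<sigma> b v eps m r cs)"
proof (rule Bochner_Integration.integrable_bound)
  show "integrable lborel (\<lambda>cs. chistar_density eps theta cs * lossB v TYPE('l) TYPE('h))"
    by (intro integrable_mult_left chistar_int)
  show "(\<lambda>cs. chistar_density eps theta cs * Jf \<sigma> b v eps m r cs) \<in> borel_measurable lborel"
    using Jf_meas[OF s, of b v eps m r] by measurable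
  show "AE cs in lborel. norm (chistar_density eps theta cs * Jf \<sigma> b v eps m r cs)
      \<le> norm (chistar_density eps theta cs * lossB v TYPE('l) TYPE('h))"
  proof (intro AE_I2)
    fix cs
    show "norm (chistar_density eps theta cs * Jf \<sigma> b v eps m r cs)
      \<le> norm (chistar_density eps theta cs * lossB v TYPE('l) TYPE('h))"
      using Jf_bnd[OF s, of b v eps m r cs] chistar_nonneg[of eps theta cs]
      by (simp add: abs_mult mult_left_mono)
  qed
qed

definition C2 :: "real \<Rightarrow> 'l::finite itself \<Rightarrow> 'h::finite itself \<Rightarrow> real" where
  "C2 v (_::'l itself) (_::'h itself) = lossK v TYPE('l) TYPE('h) * Cs TYPE('h) TYPE('l) * M1 TYPE('l) TYPE('h)"

lemma C2_nonneg: "C2 v TYPE('l::finite) TYPE('h::finite) \<ge> 0"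
  unfolding C2_def using lossK_nonneg[of v, where 'l='l and 'h='h] Cs_pos[where 'h='h and 'l='l]
    M1_nonneg[where 'l='l and 'h='h] by simp

lemma lvl2_lim:
  fixes \<sigma> :: "('l::finite,'h::finite) activation" and m :: "real^'f::finite^'h"
  assumes s: "\<sigma> \<in> {softmax, softmax1, bayes_softmax}"
  shows "((\<lambda>r. (Wf \<sigma> b v eps m r theta - Wf \<sigma> b v eps m 0 theta) / norm r) \<longlongrightarrow> 0) (at 0)"
proof -
  define h where "h r cs = chistar_density eps theta cs * Jf \<sigma> b v eps m r cs" for r cs
  have lim: "((\<lambda>r. (h r cs - h 0 cs) / norm r) \<longlongrightarrow> 0) (at 0)" for cs
  proof -
    have "((\<lambda>r. chistar_density eps theta cs * ((Jf \<sigma> b v eps m r cs - Jf \<sigma> b v eps m 0 cs) / norm r)) \<longlongrightarrow> 0) (at 0)"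
      by (intro tendsto_mult_right_zero lvl1_lim[OF s])
    then show ?thesis by (simp add: h_def right_diff_distrib)
  qed
  have bnd: "\<bar>h r cs - h 0 cs\<bar> \<le> norm r * (chistar_density eps theta cs * C2 v TYPE('l) TYPE('h))" for r cs
  proof -
    have "\<bar>h r cs - h 0 cs\<bar> = chistar_density eps theta cs * \<bar>Jf \<sigma> b v eps m r cs - Jf \<sigma> b v eps m 0 cs\<bar>"
      unfolding h_def right_diff_distrib[symmetric] abs_mult using chistar_nonneg[of eps theta cs] by simp
    also have "\<dots> \<le> chistar_density eps theta cs * (norm r * C2 v TYPE('l) TYPE('h))"
      using lvl1_bnd[OF s, of b v eps m r cs] chistar_nonneg[of eps theta cs]
      by (intro mult_left_mono) (auto simp: C2_def)
    finally show ?thesis by (simp add: algebra_simps)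
  qed
  have "((\<lambda>r. ((\<integral>cs. h r cs \<partial>lborel) - (\<integral>cs. h 0 cs \<partial>lborel)) / norm r) \<longlongrightarrow> 0) (at 0)"
    by (rule lift_limit[OF _ lim bnd]) (auto simp: h_def intro!: lvl2_int[OF s] integrable_mult_left chistar_int)
  then show ?thesis by (simp add: h_def Wf_def)
qed

lemma lvl2_bnd:
  fixes \<sigma> :: "('l::finite,'h::finite) activation" and m :: "real^'f::finite^'h"
  assumes s: "\<sigma> \<in> {softmax, softmax1, bayes_softmax}"
  shows "\<bar>Wf \<sigma> b v eps m r theta - Wf \<sigma> b v eps m 0 theta\<bar> \<le> norm r * C2 v TYPE('l) TYPE('h)"
proof -
  define g where "g cs = chistar_density eps theta cs * (Jf \<sigma> b v eps m r cs - Jf \<sigma> b v eps m 0 cs)" for cs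
  have gi: "integrable lborel g"
    unfolding g_def right_diff_distrib by (intro Bochner_Integration.integrable_diff lvl2_int[OF s])
  have "Wf \<sigma> b v eps m r theta - Wf \<sigma> b v eps m 0 theta = (\<integral>cs. g cs \<partial>lborel)"
    unfolding Wf_def g_def right_diff_distrib
    by (subst Bochner_Integration.integral_diff) (auto intro: lvl2_int[OF s])
  also have "\<bar>\<dots>\<bar> \<le> (\<integral>cs. \<bar>g cs\<bar> \<partial>lborel)"
    using integral_norm_bound[of lborel g] by simp
  also have "\<dots> \<le> (\<integral>cs. norm r * C2 v TYPE('l) TYPE('h) * chistar_density eps theta cs \<partial>lborel)"
  proof (rule Bochner_Integration.integral_mono)
    show "integrable lborel (\<lambda>cs. \<bar>g cs\<bar>)" using gi by (rule integrable_abs)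
    show "integrable lborel (\<lambda>cs. norm r * C2 v TYPE('l) TYPE('h) * chistar_density eps theta cs)"
      by (intro integrable_mult_right chistar_int)
    fix cs
    have "\<bar>g cs\<bar> = chistar_density eps theta cs * \<bar>Jf \<sigma> b v eps m r cs - Jf \<sigma> b v eps m 0 cs\<bar>"
      unfolding g_def abs_mult using chistar_nonneg[of eps theta cs] by simp
    also have "\<dots> \<le> chistar_density eps theta cs * (norm r * C2 v TYPE('l) TYPE('h))"
      using lvl1_bnd[OF s, of b v eps m r cs] chistar_nonneg[of eps theta cs]
      by (intro mult_left_mono) (auto simp: C2_def)
    finally show "\<bar>g cs\<bar> \<le> norm r * C2 v TYPE('l) TYPE('h) * chistar_density eps theta cs"
      by (simp add: algebra_simps)
  qed
  also have "\<dots> = norm r * C2 v TYPE('l) TYPE('h)" by (simp add: chistar_integral)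
  finally show ?thesis .
qed

lemma Wf_bnd:
  fixes \<sigma> :: "('l::finite,'h::finite) activation" and m :: "real^'f::finite^'h"
  assumes s: "\<sigma> \<in> {softmax, softmax1, bayes_softmax}"
  shows "\<bar>Wf \<sigma> b v eps m r theta\<bar> \<le> lossB v TYPE('l) TYPE('h)"
proof -
  have "\<bar>Wf \<sigma> b v eps m r theta\<bar> \<le> (\<integral>cs. \<bar>chistar_density eps theta cs * Jf \<sigma> b v eps m r cs\<bar> \<partial>lborel)"
    unfolding Wf_def using integral_norm_bound[of lborel "\<lambda>cs. chistar_density eps theta cs * Jf \<sigma> b v eps m r cs"]
    by simp
  also have "\<dots> \<le> (\<integral>cs. lossB v TYPE('l) TYPE('h) * chistar_density eps theta cs \<partial>lborel)"
  proof (rule Bochner_Integration.integral_mono)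
    show "integrable lborel (\<lambda>cs. \<bar>chistar_density eps theta cs * Jf \<sigma> b v eps m r cs\<bar>)"
      by (intro integrable_abs lvl2_int[OF s])
    show "integrable lborel (\<lambda>cs. lossB v TYPE('l) TYPE('h) * chistar_density eps theta cs)"
      by (intro integrable_mult_right chistar_int)
    fix cs
    show "\<bar>chistar_density eps theta cs * Jf \<sigma> b v eps m r cs\<bar> \<le> lossB v TYPE('l) TYPE('h) * chistar_density eps theta cs"
      using Jf_bnd[OF s, of b v eps m r cs] chistar_nonneg[of eps theta cs]
      by (simp add: abs_mult mult_left_mono mult.commute)
  qed
  also have "\<dots> = lossB v TYPE('l) TYPE('h)" by (simp add: chistar_integral)
  finally show ?thesis .
qed

lemma Wf_meas:
  fixes \<sigma> :: "('l::finite,'h::finite) activation" and m :: "real^'f::finite^'h"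
    and P :: "(real^'f) measure"
  assumes s: "\<sigma> \<in> {softmax, softmax1, bayes_softmax}" and sP: "sets P = sets borel"
  shows "Wf \<sigma> b v eps m r \<in> borel_measurable P"
proof -
  have sP2: "sets (P \<Otimes>\<^sub>M (lborel :: (real^'l^'f) measure)) = sets (borel :: ((real^'f) \<times> (real^'l^'f)) measure)"
  proof -
    have "sets (P \<Otimes>\<^sub>M (lborel :: (real^'l^'f) measure)) = sets (borel \<Otimes>\<^sub>M (borel :: (real^'l^'f) measure))"
      by (rule sets_pair_measure_cong[OF sP sets_lborel])
    also have "\<dots> = sets (borel :: ((real^'f) \<times> (real^'l^'f)) measure)"
      by (rule arg_cong[where f=sets, OF Binary_Product_Measure.borel_prod])
    finally show ?thesis .
  qed
  have m1: "(\<lambda>p::(real^'f) \<times> (real^'l^'f). chistar_density eps (fst p) (snd p)) \<in> borel_measurable borel"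
    by (rule borel_measurable_continuous_onI[OF chistar_cont])
  have m2: "(\<lambda>p::(real^'f) \<times> (real^'l^'f). Jf \<sigma> b v eps m r (snd p)) \<in> borel_measurable borel"
  proof (rule measurable_compose[OF _ Jf_meas[OF s]])
    show "snd \<in> (borel :: ((real^'f) \<times> (real^'l^'f)) measure) \<rightarrow>\<^sub>M borel"
      by (intro borel_measurable_continuous_onI continuous_on_snd continuous_on_id)
  qed
  have "(\<lambda>(theta, cs). chistar_density eps theta cs * Jf \<sigma> b v eps m r cs)
      \<in> borel_measurable (P \<Otimes>\<^sub>M (lborel :: (real^'l^'f) measure))"
    unfolding measurable_cong_sets[OF sP2 refl] case_prod_beta'
    using m1 m2 by (rule borel_measurable_times)
  then have "(\<lambda>theta. \<integral>cs. chistar_density eps theta cs * Jf \<sigma> b v eps m r cs \<partial>(lborel :: (real^'l^'f) measure))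
      \<in> borel_measurable P"
    by (rule lborel.borel_measurable_lebesgue_integral)
  then show ?thesis unfolding Wf_def[abs_def] .
qed

lemma lvl3_lim:
  fixes \<sigma> :: "('l::finite,'h::finite) activation" and m :: "real^'f::finite^'h"
    and P :: "(real^'f) measure"
  assumes s: "\<sigma> \<in> {softmax, softmax1, bayes_softmax}" and pP: "prob_space P" and sP: "sets P = sets borel"
  shows "((\<lambda>r. ((\<integral>theta. Wf \<sigma> b v eps m r theta \<partial>P) - (\<integral>theta. Wf \<sigma> b v eps m 0 theta \<partial>P)) / norm r) \<longlongrightarrow> 0) (at 0)"
proof (rule lift_limit)
  interpret prob_space P by (rule pP)
  show "integrable P (Wf \<sigma> b v eps m r)" for r
  proof (rule integrable_const_bound[where B="lossB v TYPE('l) TYPE('h)"])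
    show "AE x in P. norm (Wf \<sigma> b v eps m r x) \<le> lossB v TYPE('l) TYPE('h)"
      using Wf_bnd[OF s] by (intro AE_I2) simp
    show "Wf \<sigma> b v eps m r \<in> borel_measurable P" by (rule Wf_meas[OF s sP])
  qed
  show "((\<lambda>r. (Wf \<sigma> b v eps m r theta - Wf \<sigma> b v eps m 0 theta) / norm r) \<longlongrightarrow> 0) (at 0)" for theta
    by (rule lvl2_lim[OF s])
  show "\<bar>Wf \<sigma> b v eps m r theta - Wf \<sigma> b v eps m 0 theta\<bar> \<le> norm r * C2 v TYPE('l) TYPE('h)" for r theta
    by (rule lvl2_bnd[OF s])
  show "integrable P (\<lambda>_. C2 v TYPE('l) TYPE('h))" by simp
qed

lemma reparam_alt:
  fixes \<sigma> :: "('l::finite,'h::finite) activation" and m :: "real^'f::finite^'h"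
  shows "reparam_loss \<sigma> P m r b v = (1 / real CARD('l)) * (\<Sum>eps\<in>UNIV. \<integral>theta. Wf \<sigma> b v eps m r theta \<partial>P)"
proof -
  have inner: "(\<integral>xi. sample_loss \<sigma> m r b v eps cs xi * chistar_density eps theta cs * xi_density xi \<partial>lborel)
      = chistar_density eps theta cs * Jf \<sigma> b v eps m r cs" for eps theta cs
  proof -
    have "(\<integral>xi. sample_loss \<sigma> m r b v eps cs xi * chistar_density eps theta cs * xi_density xi \<partial>lborel)
        = (\<integral>xi. chistar_density eps theta cs * (lossf \<sigma> b v eps (scores m r cs xi) * xi_density xi) \<partial>lborel)"
      by (intro Bochner_Integration.integral_cong refl) (simp add: sample_loss_lossf algebra_simps)
    also have "\<dots> = chistar_density eps theta cs * Jf \<sigma> b v eps m r cs" by (simp add: Jf_def)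
    finally show ?thesis .
  qed
  show ?thesis unfolding reparam_loss_def inner Wf_def ..
qed

theorem lemma5:
  fixes P :: "(real^'f::finite) measure"
    and \<sigma> :: "('l::finite,'h::finite) activation"
    and m :: "real^'f^'h" and b :: "real^'h" and v :: real
  assumes "prob_space P" and "sets P = sets borel"
    and "\<sigma> \<in> {softmax, softmax1, bayes_softmax}"
  shows "((\<lambda>r. reparam_loss \<sigma> P m r b v) has_derivative (\<lambda>_. 0))
           (at 0 within {r :: real^'h^'h. transpose r = r})"
proof -
  note pP = assms(1) and sP = assms(2) and s = assms(3)
  define Lf where "Lf r = reparam_loss \<sigma> P m r b v" for r
  define I where "I eps r = (\<integral>theta. Wf \<sigma> b v eps m r theta \<partial>P)" for eps r
  have eq: "(Lf r - Lf 0) / norm r = (1 / real CARD('l)) * (\<Sum>eps\<in>UNIV. (I eps r - I eps 0) / norm r)" for r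
    unfolding Lf_def reparam_alt I_def
    by (simp add: sum_divide_distrib[symmetric] sum_subtractf right_diff_distrib)
  have "((\<lambda>r. (1 / real CARD('l)) * (\<Sum>eps\<in>UNIV. (I eps r - I eps 0) / norm r)) \<longlongrightarrow> 0) (at 0)"
    unfolding I_def by (intro tendsto_mult_right_zero tendsto_null_sum lvl3_lim[OF s pP sP])
  then have lim: "((\<lambda>r. (Lf r - Lf 0) / norm r) \<longlongrightarrow> 0) (at 0)" by (simp add: eq)
  have "((\<lambda>h. norm (Lf (0 + h) - Lf 0 - 0) / norm h) \<longlongrightarrow> 0) (at 0)"
    using tendsto_rabs_zero[OF lim] by (simp add: abs_divide)
  then have "(Lf has_derivative (\<lambda>_. 0)) (at 0)"
    unfolding has_derivative_at by simp
  then show ?thesis unfolding Lf_def[abs_def] by (rule has_derivative_at_withinI)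
qed

end
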